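(* Let $\mathcal O$ be a cyclic operad, $n\ge1$, and let $S_0\in\mathcal S[2]$ be the $\mathcal O$-spider represented by the unit $1_{\mathcal O}\in\mathcal O[1]$. The subspace $\mathfrak a\mathcal O_n^0$ of $\mathfrak a\mathcal O_n$ spanned by the symplecto-spiders $[S_0\otimes v\otimes w]$, $v,w\in V_n$, is a Lie subalgebra of $\mathfrak a\mathcal O_n$ isomorphic to the symplectic Lie algebra $\mathfrak{sp}(2n)$.
   Context: Work over $\mathbb R$. A cyclic operad $\mathcal O$ consists of real vector spaces $\mathcal O[m]$ ($m\ge1$), a unit $1_{\mathcal O}\in\mathcal O[1]$, composition maps $\gamma:\mathcal O[m]\otimes\mathcal O[i_1]\otimes\cdots\otimes\mathcal O[i_m]\to\mathcal O[i_1+\cdots+i_m]$, and actions of $\Sigma_{m+1}$ on $\mathcal O[m]$ (permuting the output slot $0$ and the input slots $1,\dots,m$), satisfying the usual cyclic operad axioms (Getzler–Kapranov). For $m\ge2$ let $*_m$ be the star with one internal vertex and $m$ legs; a labeling is a bijection $L$ from the legs to $\{0,\dots,m-1\}$. The space of $\mathcal O$-spiders with $m$ legs is the coinvariant space $\mathcal S[m]=(\bigoplus_L\mathcal O[m-1])_{\Sigma_m}$, with $\sigma\cdot(o)_L=(\sigma\cdot o)_{\sigma\cdot L}$; each element is a class $[o_L]$. Given spiders $S,T$ and legs $\lambda$ of $S$, $\mu$ of $T$, the mating $(S,\lambda)\circ(\mu,T)$ is obtained by choosing representatives $(o_1)_{L_1}$ of $S$, $(o_2)_{L_2}$ of $T$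 with $L_1(\lambda)=0$, $L_2(\mu)=1$, and taking the class of $\gamma(o_2\otimes o_1\otimes 1_{\mathcal O}\otimes\cdots\otimes 1_{\mathcal O})$ with legs the remaining legs of $S$ and $T$ (the legs of $S$ inserted in order at the position of $\mu$). Let $V_n=\mathbb R^{2n}$ with basis $p_1,\dots,p_n,q_1,\dots,q_n$ and standard symplectic form $\omega$ ($\omega(p_i,q_j)=\delta_{ij}=-\omega(q_j,p_i)$, $\omega(p_i,p_j)=\omega(q_i,q_j)=0$). Define $\mathfrak a\mathcal O_n=\bigoplus_{m\ge2}(\mathcal S[m]\otimes V_n^{\otimes m})_{\Sigma_m}$ ($\Sigma_m$ acting diagonally); elements $[S\otimes v_1\otimes\cdots\otimes v_m]$ are symplecto-spiders (vector $v_i$ on the $i$-th leg). The bracket of symplecto-spiders $\mathbf s_1,\mathbf s_2$ is $[\mathbf s_1,\mathbf s_2]=\sum_{\lambda\in\mathbf s_1,\mu\in\mathbf s_2}\omega(v_\lambda,w_\mu)\,\cdot$(the symplecto-spider obtained by mating the underlying spiders along $\lambda,\mu$, deleting $v_\lambda,w_\mu$ and keeping the vectors on the remaining legs), extended bilinearly; this is a Lie bracket. *)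

theory Defs
  imports "HOL-Analysis.Analysis" "HOL-Combinatorics.Permutations" "HOL-Combinatorics.Transposition"
begin

text \<open>
  A cyclic operad over the reals is modelled by
  \<^item> Op :: nat => 'a set, Op m a real linear subspace of the real vector space 'a (m >= 1),
  \<^item> u, the unit, an element of Op 1,
  \<^item> gam ar x ps, the composition gamma(x; ps!0, ..., ps!(m-1)) where x is in Op m,
    m = length ar, and ps!k is in Op (ar!k),
  \<^item> act m s x, the action of a permutation s of the slots 0..m (0 = output) on Op m.
  Convention: slot j of x becomes slot (s j) of act m s x.
\<close>

definition args :: "(nat \<Rightarrow> 'a set) \<Rightarrow> nat list \<Rightarrow> 'a list \<Rightarrow> bool" where
  "args Op ar ps \<longleftrightarrow> length ps = length ar \<and> (\<forall>k<length ar. 1 \<le> ar!k \<and> ps!k \<in> Op (ar!k))"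

text \<open>offset of the k-th (1-based) block, and the k-th (0-based) block of a list\<close>
definition off :: "nat list \<Rightarrow> nat \<Rightarrow> nat" where
  "off ar k = sum_list (take (k - 1) ar)"

definition block :: "nat list \<Rightarrow> nat \<Rightarrow> 'b list \<Rightarrow> 'b list" where
  "block ar k xs = take (ar!k) (drop (sum_list (take k ar)) xs)"

text \<open>partial composition a o_i b = gamma(a; 1,..,1,b,1,..,1), b in the i-th input (1-based)\<close>
definition pcomp :: "(nat list \<Rightarrow> 'a \<Rightarrow> 'a list \<Rightarrow> 'a) \<Rightarrow> 'a \<Rightarrow> nat \<Rightarrow> nat \<Rightarrow> nat \<Rightarrow> 'a \<Rightarrow> 'a \<Rightarrow> 'a" where
  "pcomp gam u m n i a b = gam ((replicate m 1)[i - 1 := n]) a ((replicate m u)[i - 1 := b])"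

definition rot :: "nat \<Rightarrow> nat \<Rightarrow> nat" where
  "rot k j = (if j = 0 then k else if j \<le> k then j - 1 else j)"

definition cyclic_operad ::
  "(nat \<Rightarrow> 'a::real_vector set) \<Rightarrow> 'a \<Rightarrow> (nat list \<Rightarrow> 'a \<Rightarrow> 'a list \<Rightarrow> 'a)
    \<Rightarrow> (nat \<Rightarrow> (nat \<Rightarrow> nat) \<Rightarrow> 'a \<Rightarrow> 'a) \<Rightarrow> bool" where
  "cyclic_operad Op u gam act \<longleftrightarrow>
    \<comment> \<open>vector spaces\<close>
    (\<forall>m\<ge>1. subspace (Op m)) \<and>
    u \<in> Op 1 \<and>
    \<comment> \<open>composition lands in the right space and ar multilinear\<close>
    (\<forall>ar x ps. length ar \<ge> 1 \<and> x \<in> Op (length ar) \<and> args Op ar ps \<longrightarrow>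
        gam ar x ps \<in> Op (sum_list ar)) \<and>
    (\<forall>ar x x' ps c. length ar \<ge> 1 \<and> x \<in> Op (length ar) \<and> x' \<in> Op (length ar) \<and> args Op ar ps \<longrightarrow>
        gam ar (c *\<^sub>R x + x') ps = c *\<^sub>R gam ar x ps + gam ar x' ps) \<and>
    (\<forall>ar x ps k p p' c. length ar \<ge> 1 \<and> x \<in> Op (length ar) \<and> args Op ar ps \<and> k < length ar \<and>
        p \<in> Op (ar!k) \<and> p' \<in> Op (ar!k) \<longrightarrow>
        gam ar x (ps[k := c *\<^sub>R p + p']) = c *\<^sub>R gam ar x (ps[k := p]) + gam ar x (ps[k := p'])) \<and>
    \<comment> \<open>unit laws\<close>
    (\<forall>m\<ge>1. \<forall>x\<in>Op m. gam [m] u [x] = x \<and> gam (replicate m 1) x (replicate m u) = x) \<and>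
    \<comment> \<open>associativity\<close>
    (\<forall>ar x ps js qs. length ar \<ge> 1 \<and> x \<in> Op (length ar) \<and> args Op ar ps \<and>
        length js = sum_list ar \<and> args Op js qs \<longrightarrow>
        gam js (gam ar x ps) qs =
        gam (map (\<lambda>k. sum_list (block ar k js)) [0..<length ar]) x
             (map (\<lambda>k. gam (block ar k js) (ps!k) (block ar k qs)) [0..<length ar])) \<and>
    \<comment> \<open>the action of the symmetric group on slots 0..m\<close>
    (\<forall>m\<ge>1. \<forall>s. s permutes {..m} \<longrightarrow> (\<forall>x\<in>Op m. act m s x \<in> Op m)) \<and>
    (\<forall>m\<ge>1. \<forall>s. s permutes {..m} \<longrightarrow> (\<forall>x\<in>Op m. \<forall>x'\<in>Op m. \<forall>c.
        act m s (c *\<^sub>R x + x') = c *\<^sub>R act m s x + act m s x')) \<and>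
    (\<forall>m\<ge>1. \<forall>x\<in>Op m. act m id x = x) \<and>
    (\<forall>m\<ge>1. \<forall>s r. s permutes {..m} \<and> r permutes {..m} \<longrightarrow>
        (\<forall>x\<in>Op m. act m (s \<circ> r) x = act m s (act m r x))) \<and>
    \<comment> \<open>equivariance with respect to permutations of the inputs of the outer operation\<close>
    (\<forall>ar x ps s b. length ar \<ge> 1 \<and> x \<in> Op (length ar) \<and> args Op ar ps \<and>
        s permutes {1..length ar} \<and> b permutes {..sum_list ar} \<and> b 0 = 0 \<and>
        (\<forall>j\<in>{1..length ar}. \<forall>r\<in>{1..ar!(s j - 1)}.
            b (off (map (\<lambda>j'. ar!(s j' - 1)) [1..<length ar + 1]) j + r) = off ar (s j) + r) \<longrightarrow>
        gam ar (act (length ar) s x) ps =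
        act (sum_list ar) b
          (gam (map (\<lambda>j. ar!(s j - 1)) [1..<length ar + 1]) x
                (map (\<lambda>j. ps!(s j - 1)) [1..<length ar + 1]))) \<and>
    \<comment> \<open>equivariance with respect to permutations of the inputs of an inner operation\<close>
    (\<forall>ar x ps k t b. length ar \<ge> 1 \<and> x \<in> Op (length ar) \<and> args Op ar ps \<and>
        k \<in> {1..length ar} \<and> t permutes {1..ar!(k - 1)} \<and> b permutes {..sum_list ar} \<and>
        (\<forall>r\<in>{1..ar!(k - 1)}. b (off ar k + r) = off ar k + t r) \<and>
        (\<forall>p. p \<notin> {off ar k + 1..off ar k + ar!(k - 1)} \<longrightarrow> b p = p) \<longrightarrow>
        gam ar x (ps[k - 1 := act (ar!(k - 1)) t (ps!(k - 1))]) = act (sum_list ar) b (gam ar x ps)) \<and>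
    \<comment> \<open>cyclic axioms\<close>
    act 1 (Transposition.transpose 0 1) u = u \<and>
    (\<forall>m n i a b. m \<ge> 1 \<and> n \<ge> 1 \<and> 2 \<le> i \<and> i \<le> m \<and> a \<in> Op m \<and> b \<in> Op n \<longrightarrow>
        act (m + n - 1) (rot (m + n - 1)) (pcomp gam u m n i a b) =
        pcomp gam u m n (i - 1) (act m (rot m) a) b) \<and>
    (\<forall>m n a b. m \<ge> 1 \<and> n \<ge> 1 \<and> a \<in> Op m \<and> b \<in> Op n \<longrightarrow>
        act (m + n - 1) (rot (m + n - 1)) (pcomp gam u m n 1 a b) =
        pcomp gam u n m n (act n (rot n) b) (act m (rot m) a))"

text \<open>V_n = real^('n + 'n); p_i = axis (Inl i) 1, q_i = axis (Inr i) 1; n = CARD('n) >= 1.\<close>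

definition omega :: "real^('n::finite + 'n) \<Rightarrow> real^('n + 'n) \<Rightarrow> real" where
  "omega v w = (\<Sum>i\<in>UNIV. v $ Inl i * w $ Inr i - v $ Inr i * w $ Inl i)"

definition Jmat :: "real^('n::finite + 'n)^('n + 'n)" where
  "Jmat = (\<chi> a b. case (a, b) of (Inl i, Inr j) \<Rightarrow> (if i = j then 1 else 0)
                               | (Inr i, Inl j) \<Rightarrow> (if i = j then -1 else 0)
                               | _ \<Rightarrow> 0)"

definition sp :: "(real^('n::finite + 'n)^('n + 'n)) set" where
  "sp = {X. Finite_Cartesian_Product.transpose X ** Jmat + Jmat ** X = 0}"

definition mbr :: "real^('n::finite + 'n)^('n + 'n) \<Rightarrow> real^('n + 'n)^('n + 'n) \<Rightarrow> real^('n + 'n)^('n + 'n)" where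
  "mbr X Y = X ** Y - Y ** X"

text \<open>
  A generator (x, ws) with m = length ws >= 2 and x in Op (m-1) stands for the
  symplecto-spider [(x)_L (x) v_1 (x) ... (x) v_m] where the leg carrying the vector
  ws!j ar labelled j, i.e. ws!j ar the vector on slot j of x. The space aO_n ar the
  quotient of the free real vector space FS on such generators (finitely supported
  real functions on generators) by the subspace Rel spanned by the relations expressing
  multilinearity and the coinvariance (x, ws) ~ (s.x, ws permuted by s).
\<close>

type_synonym ('a, 'n) gen = "'a \<times> (real^('n + 'n)) list"

definition valid_gen :: "(nat \<Rightarrow> 'a set) \<Rightarrow> ('a, 'n::finite) gen \<Rightarrow> bool" where
  "valid_gen Op g \<longleftrightarrow> length (snd g) \<ge> 2 \<and> fst g \<in> Op (length (snd g) - 1)"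

definition delta :: "'g \<Rightarrow> 'g \<Rightarrow> real" where
  "delta g = (\<lambda>h. if h = g then 1 else 0)"

definition fspan :: "('g \<Rightarrow> real) set \<Rightarrow> ('g \<Rightarrow> real) set" where
  "fspan S = {f. \<exists>A c. finite A \<and> A \<subseteq> S \<and> f = (\<lambda>h. \<Sum>x\<in>A. c x * x h)}"

definition FS :: "(nat \<Rightarrow> 'a set) \<Rightarrow> (('a, 'n::finite) gen \<Rightarrow> real) set" where
  "FS Op = {f. finite {g. f g \<noteq> 0} \<and> (\<forall>g. f g \<noteq> 0 \<longrightarrow> valid_gen Op g)}"

definition relations :: "(nat \<Rightarrow> 'a::real_vector set) \<Rightarrow> (nat \<Rightarrow> (nat \<Rightarrow> nat) \<Rightarrow> 'a \<Rightarrow> 'a)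
    \<Rightarrow> (('a, 'n::finite) gen \<Rightarrow> real) set" where
  "relations Op act =
     {(\<lambda>h. delta (c *\<^sub>R x + x', ws) h - c * delta (x, ws) h - delta (x', ws) h) | x x' ws c.
        valid_gen Op (x, ws) \<and> valid_gen Op (x', ws)}
   \<union> {(\<lambda>h. delta (x, ws[j := c *\<^sub>R v + v']) h - c * delta (x, ws[j := v]) h - delta (x, ws[j := v']) h)
        | x ws j v v' c. valid_gen Op (x, ws) \<and> j < length ws}
   \<union> {(\<lambda>h. delta (act (length ws - 1) s x, map (\<lambda>k. ws ! inv s k) [0..<length ws]) h - delta (x, ws) h)
        | x ws s. valid_gen Op (x, ws) \<and> s permutes {..<length ws}}"

definition Rel :: "(nat \<Rightarrow> 'a::real_vector set) \<Rightarrow> (nat \<Rightarrow> (nat \<Rightarrow> nat) \<Rightarrow> 'a \<Rightarrow> 'a)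
    \<Rightarrow> (('a, 'n::finite) gen \<Rightarrow> real) set" where
  "Rel Op act = fspan (relations Op act)"

text \<open>
  Mating of generator g1 along its slot i with generator g2 along its slot j:
  bring slot i of g1 to position 0 and slot j of g2 to position 1 (by transpositions),
  then compose gamma(o2'; o1', 1, ..., 1); the vectors on the remaining legs are kept.
\<close>
definition mate :: "'a \<Rightarrow> (nat list \<Rightarrow> 'a \<Rightarrow> 'a list \<Rightarrow> 'a) \<Rightarrow> (nat \<Rightarrow> (nat \<Rightarrow> nat) \<Rightarrow> 'a \<Rightarrow> 'a)
    \<Rightarrow> ('a, 'n::finite) gen \<Rightarrow> nat \<Rightarrow> ('a, 'n) gen \<Rightarrow> nat \<Rightarrow> ('a, 'n) gen" where
  "mate u gam act g1 i g2 j =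
     (let m1 = length (snd g1); m2 = length (snd g2);
          s1 = Transposition.transpose i 0; s2 = Transposition.transpose j 1;
          o1 = act (m1 - 1) s1 (fst g1); o2 = act (m2 - 1) s2 (fst g2);
          ws1 = map (\<lambda>k. snd g1 ! inv s1 k) [0..<m1];
          ws2 = map (\<lambda>k. snd g2 ! inv s2 k) [0..<m2]
      in (gam ((m1 - 1) # replicate (m2 - 2) 1) o2 (o1 # replicate (m2 - 2) u),
          [ws2 ! 0] @ tl ws1 @ drop 2 ws2))"

definition brgen :: "'a \<Rightarrow> (nat list \<Rightarrow> 'a \<Rightarrow> 'a list \<Rightarrow> 'a) \<Rightarrow> (nat \<Rightarrow> (nat \<Rightarrow> nat) \<Rightarrow> 'a \<Rightarrow> 'a)
    \<Rightarrow> ('a, 'n::finite) gen \<Rightarrow> ('a, 'n) gen \<Rightarrow> ('a, 'n) gen \<Rightarrow> real" where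
  "brgen u gam act g1 g2 =
     (\<lambda>h. \<Sum>i<length (snd g1). \<Sum>j<length (snd g2).
            omega (snd g1 ! i) (snd g2 ! j) * delta (mate u gam act g1 i g2 j) h)"

definition br :: "'a \<Rightarrow> (nat list \<Rightarrow> 'a \<Rightarrow> 'a list \<Rightarrow> 'a) \<Rightarrow> (nat \<Rightarrow> (nat \<Rightarrow> nat) \<Rightarrow> 'a \<Rightarrow> 'a)
    \<Rightarrow> (('a, 'n::finite) gen \<Rightarrow> real) \<Rightarrow> (('a, 'n) gen \<Rightarrow> real) \<Rightarrow> ('a, 'n) gen \<Rightarrow> real" where
  "br u gam act f g =
     (\<lambda>h. \<Sum>g1\<in>{x. f x \<noteq> 0}. \<Sum>g2\<in>{x. g x \<noteq> 0}. f g1 * g g2 * brgen u gam act g1 g2 h)"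

text \<open>representatives of the subspace aO_n^0 spanned by [S_0 (x) v (x) w]\<close>
definition A0 :: "'a \<Rightarrow> (('a, 'n::finite) gen \<Rightarrow> real) set" where
  "A0 u = fspan {delta (u, [v, w]) | v w. True}"

end

theory Submission imports Defs begin

lemma sum_restrict_sup:
  fixes f :: "'g \<Rightarrow> real"
  assumes "finite B" "A \<subseteq> B"
  shows "(\<Sum>x\<in>A. c x * f x) = (\<Sum>x\<in>B. (if x \<in> A then c x else 0) * f x)"
proof -
  have "(\<Sum>x\<in>B. (if x \<in> A then c x else 0) * f x) = (\<Sum>x\<in>B. if x \<in> A then c x * f x else 0)"
    by (rule sum.cong) auto
  also have "\<dots> = (\<Sum>x\<in>B \<inter> A. c x * f x)"
    using sum.inter_restrict[OF assms(1), of "\<lambda>x. c x * f x" A] by simp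
  also have "B \<inter> A = A" using assms by auto
  finally show ?thesis by simp
qed

lemma fspanD: "f \<in> fspan S \<Longrightarrow> \<exists>A c. finite A \<and> A \<subseteq> S \<and> f = (\<lambda>h. \<Sum>x\<in>A. c x * x h)"
  unfolding fspan_def by (simp only: mem_Collect_eq)

lemma fspanI: "finite A \<Longrightarrow> A \<subseteq> S \<Longrightarrow> f = (\<lambda>h. \<Sum>x\<in>A. c x * x h) \<Longrightarrow> f \<in> fspan S"
  unfolding fspan_def by (rule CollectI, intro exI conjI)

lemma fspan_add:
  assumes "f \<in> fspan S" "g \<in> fspan S"
  shows "(\<lambda>h. f h + g h) \<in> fspan S"
proof -
  obtain A c where A: "finite A" "A \<subseteq> S" "f = (\<lambda>h. \<Sum>x\<in>A. c x * x h)"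
    using fspanD[OF assms(1)] by (elim exE conjE) iprover
  obtain B d where B: "finite B" "B \<subseteq> S" "g = (\<lambda>h. \<Sum>x\<in>B. d x * x h)"
    using fspanD[OF assms(2)] by (elim exE conjE) iprover
  let ?e = "\<lambda>x. (if x \<in> A then c x else 0) + (if x \<in> B then d x else 0)"
  have "(\<lambda>h. f h + g h) = (\<lambda>h. \<Sum>x\<in>A \<union> B. ?e x * x h)"
  proof
    fix h
    have "f h = (\<Sum>x\<in>A. c x * x h)" using A(3) by simp
    also have "\<dots> = (\<Sum>x\<in>A \<union> B. (if x \<in> A then c x else 0) * x h)"
      by (rule sum_restrict_sup) (use A B in auto)
    finally have 1: "f h = (\<Sum>x\<in>A \<union> B. (if x \<in> A then c x else 0) * x h)" .
    have "g h = (\<Sum>x\<in>B. d x * x h)" using B(3) by simp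
    also have "\<dots> = (\<Sum>x\<in>A \<union> B. (if x \<in> B then d x else 0) * x h)"
      by (rule sum_restrict_sup) (use A B in auto)
    finally have 2: "g h = (\<Sum>x\<in>A \<union> B. (if x \<in> B then d x else 0) * x h)" .
    show "f h + g h = (\<Sum>x\<in>A \<union> B. ?e x * x h)"
      unfolding 1 2 by (simp add: sum.distrib distrib_right)
  qed
  then show ?thesis by (rule fspanI[rotated 2]) (use A B in auto)
qed

lemma fspan_scale:
  assumes "f \<in> fspan S"
  shows "(\<lambda>h. a * f h) \<in> fspan S"
proof -
  obtain A c where A: "finite A" "A \<subseteq> S" "f = (\<lambda>h. \<Sum>x\<in>A. c x * x h)"
    using fspanD[OF assms(1)] by (elim exE conjE) iprover
  have "(\<lambda>h. a * f h) = (\<lambda>h. \<Sum>x\<in>A. (a * c x) * x h)"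
  proof (rule ext)
    fix h show "a * f h = (\<Sum>x\<in>A. (a * c x) * x h)"
      unfolding A(3) by (simp add: sum_distrib_left mult.assoc)
  qed
  then show ?thesis by (rule fspanI[rotated 2]) (use A in auto)
qed

lemma fspan_zero: "(\<lambda>h. 0) \<in> fspan S"
  by (rule fspanI[of "{}"]) auto

lemma fspan_base: "x \<in> S \<Longrightarrow> x \<in> fspan S"
  by (rule fspanI[of "{x}" _ _ "\<lambda>_. 1"]) auto

lemma fspan_eq: "f \<in> fspan S \<Longrightarrow> (\<And>h. g h = f h) \<Longrightarrow> g \<in> fspan S"
proof -
  assume "f \<in> fspan S" "\<And>h. g h = f h"
  then have "g = f" by auto
  then show ?thesis using \<open>f \<in> fspan S\<close> by simp
qed

lemma fspan_diff:
  assumes "f \<in> fspan S" "g \<in> fspan S"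
  shows "(\<lambda>h. f h - g h) \<in> fspan S"
  using fspan_add[OF assms(1) fspan_scale[OF assms(2), of "-1"]] by simp

lemma fspan_sum:
  assumes "finite I" "\<And>i. i \<in> I \<Longrightarrow> F i \<in> fspan S"
  shows "(\<lambda>h. \<Sum>i\<in>I. F i h) \<in> fspan S"
  using assms
proof (induction I rule: finite_induct)
  case empty then show ?case using fspan_zero by simp
next
  case (insert i I)
  have "(\<lambda>h. F i h + (\<Sum>i\<in>I. F i h)) \<in> fspan S"
    by (rule fspan_add) (use insert in auto)
  then show ?case using insert by simp
qed


lemma op_facts:
  assumes "cyclic_operad Op u gam act"
  shows "u \<in> Op 1" "gam [1] u [u] = u" "act 1 id u = u"
    "act 1 (Transposition.transpose 0 1) u = u"
    "\<And>x. x \<in> Op 1 \<Longrightarrow> act 1 id x = x"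
    "\<And>x. x \<in> Op 1 \<Longrightarrow> act 1 (Transposition.transpose 0 1) (act 1 (Transposition.transpose 0 1) x) = x"
    "\<And>x x' c. x \<in> Op 1 \<Longrightarrow> x' \<in> Op 1 \<Longrightarrow>
        act 1 (Transposition.transpose 0 1) (c *\<^sub>R x + x') =
        c *\<^sub>R act 1 (Transposition.transpose 0 1) x + act 1 (Transposition.transpose 0 1) x'"
    "subspace (Op 1)"
proof -
  let ?t = "Transposition.transpose (0::nat) 1"
  note C = assms[unfolded cyclic_operad_def]
  have tp: "?t permutes {..1}" by (rule permutes_swap_id) auto
  have sub: "\<forall>m\<ge>1. subspace (Op m)" using C by (elim conjE) assumption
  show u: "u \<in> Op 1" using C by (elim conjE) assumption
  have unit: "\<forall>m\<ge>1. \<forall>x\<in>Op m. gam [m] u [x] = x \<and> gam (replicate m 1) x (replicate m u) = x"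
    using C by (elim conjE) assumption
  have actid: "\<forall>m\<ge>1. \<forall>x\<in>Op m. act m id x = x" using C by (elim conjE) assumption
  have actlin: "\<forall>m\<ge>1. \<forall>s. s permutes {..m} \<longrightarrow> (\<forall>x\<in>Op m. \<forall>x'\<in>Op m. \<forall>c.
        act m s (c *\<^sub>R x + x') = c *\<^sub>R act m s x + act m s x')" using C by (elim conjE) assumption
  have actcomp: "\<forall>m\<ge>1. \<forall>s r. s permutes {..m} \<and> r permutes {..m} \<longrightarrow>
        (\<forall>x\<in>Op m. act m (s \<circ> r) x = act m s (act m r x))" using C by (elim conjE) assumption
  show "act 1 ?t u = u" using C by (elim conjE) assumption
  show "gam [1] u [u] = u" using unit[rule_format, OF order_refl u] by (elim conjE)
  show "act 1 id u = u" using actid[rule_format, OF order_refl u] .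
  show "\<And>x. x \<in> Op 1 \<Longrightarrow> act 1 id x = x" using actid[rule_format, OF order_refl] .
  show "\<And>x. x \<in> Op 1 \<Longrightarrow> act 1 ?t (act 1 ?t x) = x"
  proof -
    fix x assume x: "x \<in> Op 1"
    have "act 1 (?t \<circ> ?t) x = act 1 ?t (act 1 ?t x)"
      using actcomp[rule_format, OF order_refl, of ?t ?t x] x tp by simp
    moreover have "act 1 (?t \<circ> ?t) x = x"
      using actid[rule_format, OF order_refl x] by simp
    ultimately show "act 1 ?t (act 1 ?t x) = x" by simp
  qed
  show "\<And>x x' c. x \<in> Op 1 \<Longrightarrow> x' \<in> Op 1 \<Longrightarrow>
        act 1 ?t (c *\<^sub>R x + x') = c *\<^sub>R act 1 ?t x + act 1 ?t x'"
    by (rule actlin[rule_format, OF order_refl tp])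
  show "subspace (Op 1)" using sub[rule_format, OF order_refl] .
qed

definition E :: "('n::finite + 'n) \<Rightarrow> real^('n + 'n)" where
  "E a = axis a 1"

lemma E_inj: "E a = E b \<longleftrightarrow> a = b"
  unfolding E_def by (simp add: axis_eq_axis)

lemma ifmultL: "(if P then a else 0) * (b::real) = (if P then a * b else 0)" by simp
lemma ifmultR: "(a::real) * (if P then b else 0) = (if P then a * b else 0)" by simp

lemma omega_E: "omega (E a) (E c) = Jmat $ a $ c"
  unfolding omega_def E_def Jmat_def
  by (cases a; cases c) (auto simp: axis_def ifmultL ifmultR sum.delta sum.delta' sum_negf)

lemma sum_plus_UNIV: "(\<Sum>k\<in>(UNIV::('n::finite + 'n) set). f k) = (\<Sum>i\<in>UNIV. f (Inl i)) + (\<Sum>i\<in>UNIV. f (Inr i))"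
  using sum.Plus[of "UNIV::'n set" "UNIV::'n set" f] by (simp add: o_def)

lemma JJ: "(Jmat :: real^('n::finite + 'n)^('n + 'n)) ** Jmat = - mat 1"
  unfolding matrix_matrix_mult_def
  apply (simp add: vec_eq_iff sum_plus_UNIV mat_def)
  apply (intro allI)
  subgoal for a b by (cases a; cases b) (auto simp: Jmat_def ifmultL ifmultR sum.delta sum.delta' cong del: if_weak_cong)
  done

lemma JT: "Finite_Cartesian_Product.transpose (Jmat :: real^('n::finite + 'n)^('n + 'n)) = - Jmat"
  unfolding Finite_Cartesian_Product.transpose_def
  apply (simp add: vec_eq_iff)
  apply (intro allI)
  subgoal for a b by (cases a; cases b) (auto simp: Jmat_def)
  done

section \<open>Mating of two-legged spiders\<close>

lemma mate2:
  assumes op: "cyclic_operad Op u gam act" and ij: "i < 2" "j < 2"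
  shows "mate u gam act (u, [v0, v1]) i (u, [w0, w1]) j =
     (u, [if j = 0 then w1 else w0, if i = 0 then v1 else v0])"
proof -
  note F = op_facts[OF op]
  have a1: "act 1 (Transposition.transpose i 0) u = u"
    using ij F by (cases "i = 0") (auto simp: less_2_cases_iff transpose_commute)
  have a2: "act 1 (Transposition.transpose j 1) u = u"
    using ij F by (cases "j = 0") (auto simp: less_2_cases_iff)
  show ?thesis
    unfolding mate_def Let_def using a1 a2 F ij
    by (auto simp: less_2_cases_iff upt_rec Transposition.transpose_def)
qed

lemma brgen2:
  assumes op: "cyclic_operad Op u gam act"
  shows "brgen u gam act (u, [v0, v1]) (u, [w0, w1]) =
    (\<lambda>h. omega v0 w0 * delta (u, [w1, v1]) h + omega v0 w1 * delta (u, [w0, v1]) h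
       + omega v1 w0 * delta (u, [w1, v0]) h + omega v1 w1 * delta (u, [w0, v0]) h)"
proof (rule ext)
  fix h
  have L: "{..<length [v0, v1]} = {0::nat, 1}" "{..<length [w0, w1]} = {0::nat, 1}" by auto
  show "brgen u gam act (u, [v0, v1]) (u, [w0, w1]) h = omega v0 w0 * delta (u, [w1, v1]) h + omega v0 w1 * delta (u, [w0, v1]) h
       + omega v1 w0 * delta (u, [w1, v0]) h + omega v1 w1 * delta (u, [w0, v0]) h"
    unfolding brgen_def snd_conv L
    by (simp add: mate2[OF op] add.assoc)
qed


section \<open>The map Phi from matrices to spider combinations\<close>

definition Phi :: "'a \<Rightarrow> real^('n::finite + 'n)^('n + 'n) \<Rightarrow> ('a, 'n) gen \<Rightarrow> real" where
  "Phi u M = (\<lambda>h. \<Sum>a\<in>UNIV. \<Sum>b\<in>UNIV. M $ a $ b * delta (u, [E a, E b]) h)"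

lemma Phi_A0: "Phi u M \<in> A0 u"
  unfolding Phi_def A0_def
  apply (rule fspan_sum, simp)
  apply (rule fspan_sum, simp)
  apply (rule fspan_scale)
  apply (rule fspan_base)
  by auto

lemma Phi_lin: "Phi u (c *\<^sub>R A + B) = (\<lambda>h. c * Phi u A h + Phi u B h)"
  unfolding Phi_def by (simp add: sum.distrib sum_distrib_left distrib_right mult.assoc)

lemma Phi_diff: "Phi u (A - B) h = Phi u A h - Phi u B h"
  unfolding Phi_def by (simp add: sum_subtractf left_diff_distrib)

lemma Phi_zero: "Phi u 0 h = 0"
  unfolding Phi_def by simp

lemma Phi_sum: "finite I \<Longrightarrow> Phi u (\<Sum>i\<in>I. c i *\<^sub>R M i) h = (\<Sum>i\<in>I. c i * Phi u (M i) h)"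
proof (induction I rule: finite_induct)
  case empty then show ?case by (simp add: Phi_zero)
next
  case (insert i I)
  then show ?case by (simp add: Phi_lin)
qed

lemma if_conj_0: "(if P \<and> Q then x else (0::real)) = (if P then if Q then x else 0 else 0)"
  by simp

lemma Phi_eval: "Phi u M (u, [E a, E b]) = M $ a $ b"
proof -
  have "Phi u M (u, [E a, E b]) = (\<Sum>a'\<in>UNIV. \<Sum>b'\<in>UNIV. if a' = a then if b' = b then M $ a' $ b' else 0 else 0)"
    unfolding Phi_def delta_def by (intro sum.cong refl) (auto simp: E_inj)
  also have "\<dots> = (\<Sum>a'\<in>UNIV. if a' = a then M $ a' $ b else 0)"
    apply (rule sum.cong[OF refl])
    subgoal for x by (cases "x = a") (simp_all add: sum.delta)
    done
  also have "\<dots> = M $ a $ b"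
    by (simp add: sum.delta)
  finally show ?thesis .
qed

definition S0 :: "'a \<Rightarrow> ('a, 'n::finite) gen set" where
  "S0 u = (\<lambda>(a, b). (u, [E a, E b])) ` UNIV"

lemma S0_finite: "finite (S0 u)"
  unfolding S0_def by simp

lemma Phi_supp: "{g. Phi u M g \<noteq> 0} \<subseteq> S0 u"
proof
  fix g assume g: "g \<in> {g. Phi u M g \<noteq> 0}"
  show "g \<in> S0 u"
  proof (rule ccontr)
    assume "g \<notin> S0 u"
    then have "\<And>a b. delta (u, [E a, E b]) g = 0"
      unfolding S0_def delta_def by auto
    then have "Phi u M g = 0" unfolding Phi_def by simp
    then show False using g by simp
  qed
qed

lemma sum_S0: "(\<Sum>g\<in>S0 u. F g) = (\<Sum>a\<in>UNIV. \<Sum>b\<in>UNIV. F (u, [E a, E b]))"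
proof -
  have inj: "inj_on (\<lambda>(a, b). (u, [E a, E b])) (UNIV :: (('n::finite + 'n) \<times> ('n + 'n)) set)"
    by (auto simp: inj_on_def E_inj)
  have "(\<Sum>g\<in>S0 u. F g) = (\<Sum>p\<in>UNIV. F ((\<lambda>(a, b). (u, [E a, E b])) p))"
    unfolding S0_def by (subst sum.reindex[OF inj]) (simp add: o_def)
  also have "\<dots> = (\<Sum>p\<in>UNIV \<times> UNIV. F ((\<lambda>(a, b). (u, [E a, E b])) p))"
    by (simp add: UNIV_Times_UNIV)
  also have "\<dots> = (\<Sum>(a, b)\<in>UNIV \<times> UNIV. F (u, [E a, E b]))"
    by (intro sum.cong refl) auto
  also have "\<dots> = (\<Sum>a\<in>UNIV. \<Sum>b\<in>UNIV. F (u, [E a, E b]))"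
    by (rule sum.cartesian_product[symmetric])
  finally show ?thesis .
qed

lemma br_super:
  assumes "finite T1" "finite T2" "{x. f x \<noteq> 0} \<subseteq> T1" "{x. g x \<noteq> 0} \<subseteq> T2"
  shows "br u gam act f g h = (\<Sum>g1\<in>T1. \<Sum>g2\<in>T2. f g1 * g g2 * brgen u gam act g1 g2 h)"
proof -
  have "br u gam act f g h = (\<Sum>g1\<in>{x. f x \<noteq> 0}. \<Sum>g2\<in>{x. g x \<noteq> 0}. f g1 * g g2 * brgen u gam act g1 g2 h)"
    unfolding br_def by simp
  also have "\<dots> = (\<Sum>g1\<in>{x. f x \<noteq> 0}. \<Sum>g2\<in>T2. f g1 * g g2 * brgen u gam act g1 g2 h)"
    by (intro sum.cong refl sum.mono_neutral_left) (use assms in auto)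
  also have "\<dots> = (\<Sum>g1\<in>T1. \<Sum>g2\<in>T2. f g1 * g g2 * brgen u gam act g1 g2 h)"
    by (intro sum.mono_neutral_left) (use assms in auto)
  finally show ?thesis .
qed

lemma br_Phi_raw:
  assumes op: "cyclic_operad Op u gam act"
  shows "br u gam act (Phi u A) (Phi u B) h =
    (\<Sum>a\<in>UNIV. \<Sum>b\<in>UNIV. \<Sum>c\<in>UNIV. \<Sum>d\<in>UNIV. A$a$b * B$c$d *
       (Jmat$a$c * delta (u, [E d, E b]) h + Jmat$a$d * delta (u, [E c, E b]) h
      + Jmat$b$c * delta (u, [E d, E a]) h + Jmat$b$d * delta (u, [E c, E a]) h))"
proof -
  have "br u gam act (Phi u A) (Phi u B) h =
     (\<Sum>g1\<in>S0 u. \<Sum>g2\<in>S0 u. Phi u A g1 * Phi u B g2 * brgen u gam act g1 g2 h)"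
    by (rule br_super) (auto simp: S0_finite Phi_supp)
  also have "\<dots> = (\<Sum>a\<in>UNIV. \<Sum>b\<in>UNIV. \<Sum>c\<in>UNIV. \<Sum>d\<in>UNIV.
      Phi u A (u, [E a, E b]) * Phi u B (u, [E c, E d]) * brgen u gam act (u, [E a, E b]) (u, [E c, E d]) h)"
    by (simp only: sum_S0)
  also have "\<dots> = (\<Sum>a\<in>UNIV. \<Sum>b\<in>UNIV. \<Sum>c\<in>UNIV. \<Sum>d\<in>UNIV. A$a$b * B$c$d *
       (Jmat$a$c * delta (u, [E d, E b]) h + Jmat$a$d * delta (u, [E c, E b]) h
      + Jmat$b$c * delta (u, [E d, E a]) h + Jmat$b$d * delta (u, [E c, E a]) h))"
    by (simp add: Phi_eval brgen2[OF op] omega_E)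
  finally show ?thesis .
qed


lemma sw34: "(\<Sum>a\<in>A. \<Sum>b\<in>B. \<Sum>c\<in>C. \<Sum>d\<in>D. F a b c d) = (\<Sum>a\<in>A. \<Sum>b\<in>B. \<Sum>d\<in>D. \<Sum>c\<in>C. F a b c d)"
  by (intro sum.cong refl) (rule sum.swap)

lemma sw23: "(\<Sum>a\<in>A. \<Sum>b\<in>B. \<Sum>c\<in>C. G a b c) = (\<Sum>a\<in>A. \<Sum>c\<in>C. \<Sum>b\<in>B. G a b c)"
  by (intro sum.cong refl) (rule sum.swap)

lemma sw12: "(\<Sum>a\<in>A. \<Sum>b\<in>B. G a b) = (\<Sum>b\<in>B. \<Sum>a\<in>A. G a b)"
  by (rule sum.swap)

lemma perm1: "(\<Sum>a\<in>U. \<Sum>b\<in>U. \<Sum>c\<in>U. \<Sum>d\<in>U. F a b c d) = (\<Sum>d\<in>U. \<Sum>b\<in>U. \<Sum>c\<in>U. \<Sum>a\<in>U. F a b c d)"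
proof -
  have "(\<Sum>a\<in>U. \<Sum>b\<in>U. \<Sum>c\<in>U. \<Sum>d\<in>U. F a b c d) = (\<Sum>a\<in>U. \<Sum>b\<in>U. \<Sum>d\<in>U. \<Sum>c\<in>U. F a b c d)" by (rule sw34)
  also have "\<dots> = (\<Sum>a\<in>U. \<Sum>d\<in>U. \<Sum>b\<in>U. \<Sum>c\<in>U. F a b c d)" by (rule sw23)
  also have "\<dots> = (\<Sum>d\<in>U. \<Sum>a\<in>U. \<Sum>b\<in>U. \<Sum>c\<in>U. F a b c d)" by (rule sw12)
  also have "\<dots> = (\<Sum>d\<in>U. \<Sum>b\<in>U. \<Sum>a\<in>U. \<Sum>c\<in>U. F a b c d)" by (rule sw23)
  also have "\<dots> = (\<Sum>d\<in>U. \<Sum>b\<in>U. \<Sum>c\<in>U. \<Sum>a\<in>U. F a b c d)" by (rule sw34)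
  finally show ?thesis .
qed

lemma perm2: "(\<Sum>a\<in>U. \<Sum>b\<in>U. \<Sum>c\<in>U. \<Sum>d\<in>U. F a b c d) = (\<Sum>c\<in>U. \<Sum>b\<in>U. \<Sum>d\<in>U. \<Sum>a\<in>U. F a b c d)"
proof -
  have "(\<Sum>a\<in>U. \<Sum>b\<in>U. \<Sum>c\<in>U. \<Sum>d\<in>U. F a b c d) = (\<Sum>a\<in>U. \<Sum>c\<in>U. \<Sum>b\<in>U. \<Sum>d\<in>U. F a b c d)" by (rule sw23)
  also have "\<dots> = (\<Sum>c\<in>U. \<Sum>a\<in>U. \<Sum>b\<in>U. \<Sum>d\<in>U. F a b c d)" by (rule sw12)
  also have "\<dots> = (\<Sum>c\<in>U. \<Sum>b\<in>U. \<Sum>a\<in>U. \<Sum>d\<in>U. F a b c d)" by (rule sw23)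
  also have "\<dots> = (\<Sum>c\<in>U. \<Sum>b\<in>U. \<Sum>d\<in>U. \<Sum>a\<in>U. F a b c d)" by (rule sw34)
  finally show ?thesis .
qed

lemma perm3: "(\<Sum>a\<in>U. \<Sum>b\<in>U. \<Sum>c\<in>U. \<Sum>d\<in>U. F a b c d) = (\<Sum>d\<in>U. \<Sum>a\<in>U. \<Sum>c\<in>U. \<Sum>b\<in>U. F a b c d)"
proof -
  have "(\<Sum>a\<in>U. \<Sum>b\<in>U. \<Sum>c\<in>U. \<Sum>d\<in>U. F a b c d) = (\<Sum>a\<in>U. \<Sum>b\<in>U. \<Sum>d\<in>U. \<Sum>c\<in>U. F a b c d)" by (rule sw34)
  also have "\<dots> = (\<Sum>a\<in>U. \<Sum>d\<in>U. \<Sum>b\<in>U. \<Sum>c\<in>U. F a b c d)" by (rule sw23)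
  also have "\<dots> = (\<Sum>d\<in>U. \<Sum>a\<in>U. \<Sum>b\<in>U. \<Sum>c\<in>U. F a b c d)" by (rule sw12)
  also have "\<dots> = (\<Sum>d\<in>U. \<Sum>a\<in>U. \<Sum>c\<in>U. \<Sum>b\<in>U. F a b c d)" by (rule sw34)
  finally show ?thesis .
qed

lemma perm4: "(\<Sum>a\<in>U. \<Sum>b\<in>U. \<Sum>c\<in>U. \<Sum>d\<in>U. F a b c d) = (\<Sum>c\<in>U. \<Sum>a\<in>U. \<Sum>d\<in>U. \<Sum>b\<in>U. F a b c d)"
proof -
  have "(\<Sum>a\<in>U. \<Sum>b\<in>U. \<Sum>c\<in>U. \<Sum>d\<in>U. F a b c d) = (\<Sum>a\<in>U. \<Sum>c\<in>U. \<Sum>b\<in>U. \<Sum>d\<in>U. F a b c d)" by (rule sw23)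
  also have "\<dots> = (\<Sum>c\<in>U. \<Sum>a\<in>U. \<Sum>b\<in>U. \<Sum>d\<in>U. F a b c d)" by (rule sw12)
  also have "\<dots> = (\<Sum>c\<in>U. \<Sum>a\<in>U. \<Sum>d\<in>U. \<Sum>b\<in>U. F a b c d)" by (rule sw34)
  finally show ?thesis .
qed

section \<open>The four terms of the bracket\<close>

abbreviation mtr :: "'x^'m^'k \<Rightarrow> 'x^'k^'m" where "mtr \<equiv> Finite_Cartesian_Product.transpose"

lemma mmA: "(mtr A ** J ** B)$y$x = (\<Sum>c\<in>UNIV. \<Sum>a\<in>UNIV. A$a$y * J$a$c * B$c$x)"
  for A B J :: "real^'i::finite^'i"
  by (simp add: matrix_matrix_mult_def Finite_Cartesian_Product.transpose_def sum_distrib_right)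
lemma mmB: "(mtr A ** J ** mtr B)$y$x = (\<Sum>c\<in>UNIV. \<Sum>a\<in>UNIV. A$a$y * J$a$c * B$x$c)"
  for A B J :: "real^'i::finite^'i"
  by (simp add: matrix_matrix_mult_def Finite_Cartesian_Product.transpose_def sum_distrib_right)
lemma mmC: "(A ** J ** B)$y$x = (\<Sum>c\<in>UNIV. \<Sum>a\<in>UNIV. A$y$a * J$a$c * B$c$x)"
  for A B J :: "real^'i::finite^'i"
  by (simp add: matrix_matrix_mult_def Finite_Cartesian_Product.transpose_def sum_distrib_right)
lemma mmD: "(A ** J ** mtr B)$y$x = (\<Sum>c\<in>UNIV. \<Sum>a\<in>UNIV. A$y$a * J$a$c * B$x$c)"
  for A B J :: "real^'i::finite^'i"
  by (simp add: matrix_matrix_mult_def Finite_Cartesian_Product.transpose_def sum_distrib_right)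

lemma term1:
  fixes A B J :: "real^'i::finite^'i" and D :: "'i \<Rightarrow> 'i \<Rightarrow> real"
  shows "(\<Sum>a\<in>UNIV. \<Sum>b\<in>UNIV. \<Sum>c\<in>UNIV. \<Sum>d\<in>UNIV. A$a$b * B$c$d * (J$a$c * D d b)) =
         (\<Sum>x\<in>UNIV. \<Sum>y\<in>UNIV. (mtr A ** J ** B)$y$x * D x y)"
  apply (subst perm1)
  apply (simp only: mmA sum_distrib_right)
  apply (intro sum.cong refl)
  apply (simp only: ac_simps)
  done

lemma term2:
  fixes A B J :: "real^'i::finite^'i" and D :: "'i \<Rightarrow> 'i \<Rightarrow> real"
  shows "(\<Sum>a\<in>UNIV. \<Sum>b\<in>UNIV. \<Sum>c\<in>UNIV. \<Sum>d\<in>UNIV. A$a$b * B$c$d * (J$a$d * D c b)) =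
         (\<Sum>x\<in>UNIV. \<Sum>y\<in>UNIV. (mtr A ** J ** mtr B)$y$x * D x y)"
  apply (subst perm2)
  apply (simp only: mmB sum_distrib_right)
  apply (intro sum.cong refl)
  apply (simp only: ac_simps)
  done

lemma term3:
  fixes A B J :: "real^'i::finite^'i" and D :: "'i \<Rightarrow> 'i \<Rightarrow> real"
  shows "(\<Sum>a\<in>UNIV. \<Sum>b\<in>UNIV. \<Sum>c\<in>UNIV. \<Sum>d\<in>UNIV. A$a$b * B$c$d * (J$b$c * D d a)) =
         (\<Sum>x\<in>UNIV. \<Sum>y\<in>UNIV. (A ** J ** B)$y$x * D x y)"
  apply (subst perm3)
  apply (simp only: mmC sum_distrib_right)
  apply (intro sum.cong refl)
  apply (simp only: ac_simps)
  done

lemma term4: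
  fixes A B J :: "real^'i::finite^'i" and D :: "'i \<Rightarrow> 'i \<Rightarrow> real"
  shows "(\<Sum>a\<in>UNIV. \<Sum>b\<in>UNIV. \<Sum>c\<in>UNIV. \<Sum>d\<in>UNIV. A$a$b * B$c$d * (J$b$d * D c a)) =
         (\<Sum>x\<in>UNIV. \<Sum>y\<in>UNIV. (A ** J ** mtr B)$y$x * D x y)"
  apply (subst perm4)
  apply (simp only: mmD sum_distrib_right)
  apply (intro sum.cong refl)
  apply (simp only: ac_simps)
  done


lemma Phi_mtr4:
  "Phi u (mtr (N1 + N2 + N3 + N4)) h =
     (\<Sum>x\<in>UNIV. \<Sum>y\<in>UNIV. N1$y$x * delta (u, [E x, E y]) h)
   + (\<Sum>x\<in>UNIV. \<Sum>y\<in>UNIV. N2$y$x * delta (u, [E x, E y]) h)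
   + (\<Sum>x\<in>UNIV. \<Sum>y\<in>UNIV. N3$y$x * delta (u, [E x, E y]) h)
   + (\<Sum>x\<in>UNIV. \<Sum>y\<in>UNIV. N4$y$x * delta (u, [E x, E y]) h)"
  unfolding Phi_def by (simp add: Finite_Cartesian_Product.transpose_def sum.distrib distrib_right)

lemma br_Phi:
  assumes op: "cyclic_operad Op u gam act"
  shows "br u gam act (Phi u A) (Phi u B) h =
    Phi u (mtr (mtr A ** Jmat ** B + mtr A ** Jmat ** mtr B + A ** Jmat ** B + A ** Jmat ** mtr B)) h"
  unfolding br_Phi_raw[OF op] Phi_mtr4
  unfolding distrib_left sum.distrib
  unfolding term1[of A B Jmat "\<lambda>x y. delta (u, [E x, E y]) h"]
    term2[of A B Jmat "\<lambda>x y. delta (u, [E x, E y]) h"]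
    term3[of A B Jmat "\<lambda>x y. delta (u, [E x, E y]) h"]
    term4[of A B Jmat "\<lambda>x y. delta (u, [E x, E y]) h"]
  by (rule refl)


lemma mm_add_r: "(A + B) ** C = A ** C + B ** (C :: real^'k::finite^'m::finite)"
  for A B :: "real^'m^'l::finite"
  by (simp add: matrix_matrix_mult_def vec_eq_iff sum.distrib distrib_right)
lemma mm_diff_l: "A ** (B - C) = A ** B - A ** (C :: real^'k::finite^'m::finite)"
  for A :: "real^'m^'l::finite"
  by (simp add: matrix_matrix_mult_def vec_eq_iff sum_subtractf right_diff_distrib)
lemma mm_diff_r: "(A - B) ** C = A ** C - B ** (C :: real^'k::finite^'m::finite)"
  for A B :: "real^'m^'l::finite"
  by (simp add: matrix_matrix_mult_def vec_eq_iff sum_subtractf left_diff_distrib)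
lemma mm_neg_l: "(- A) ** C = - (A ** (C :: real^'k::finite^'m::finite))"
  for A :: "real^'m^'l::finite"
  by (simp add: matrix_matrix_mult_def vec_eq_iff sum_negf)
lemma mm_neg_r: "A ** (- C) = - (A ** (C :: real^'k::finite^'m::finite))"
  for A :: "real^'m^'l::finite"
  by (simp add: matrix_matrix_mult_def vec_eq_iff sum_negf)
lemma mm_scale_l: "(k *\<^sub>R A) ** C = k *\<^sub>R (A ** (C :: real^'k::finite^'m::finite))"
  for A :: "real^'m^'l::finite"
  by (simp add: matrix_matrix_mult_def vec_eq_iff sum_distrib_left mult.assoc)
lemma mm_scale_r: "A ** (k *\<^sub>R C) = k *\<^sub>R (A ** (C :: real^'k::finite^'m::finite))"
  for A :: "real^'m^'l::finite"
  by (simp add: matrix_matrix_mult_def vec_eq_iff sum_distrib_left mult_ac)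
lemma tr_add: "mtr (A + B) = mtr A + mtr (B :: real^'m::finite^'l::finite)"
  by (simp add: Finite_Cartesian_Product.transpose_def vec_eq_iff)
lemma tr_diff: "mtr (A - B) = mtr A - mtr (B :: real^'m::finite^'l::finite)"
  by (simp add: Finite_Cartesian_Product.transpose_def vec_eq_iff)
lemma tr_neg: "mtr (- A) = - mtr (A :: real^'m::finite^'l::finite)"
  by (simp add: Finite_Cartesian_Product.transpose_def vec_eq_iff)

lemma JJr: "(Jmat :: real^('n::finite + 'n)^('n + 'n)) ** (Jmat ** M) = - M"
  by (simp add: matrix_mul_assoc JJ mm_neg_l)

lemmas msimps = matrix_add_ldistrib mm_add_r mm_diff_l mm_diff_r mm_neg_l mm_neg_r mm_scale_l mm_scale_r
  tr_add tr_diff tr_neg transpose_scalar matrix_transpose_mul matrix_mul_assoc[symmetric] JJ JJr JT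
  transpose_transpose

lemma spT:
  assumes "(X :: real^('n::finite + 'n)^('n + 'n)) \<in> sp"
  shows "mtr X = Jmat ** (X ** Jmat)"
proof -
  have "mtr X ** Jmat + Jmat ** X = 0" using assms unfolding sp_def by simp
  then have "mtr X ** Jmat = - (Jmat ** X)" by (simp add: eq_neg_iff_add_eq_0)
  then have "(mtr X ** Jmat) ** Jmat = (- (Jmat ** X)) ** Jmat" by simp
  then show ?thesis by (simp add: msimps)
qed

definition Km :: "real^('n::finite + 'n)^('n + 'n) \<Rightarrow> real^('n + 'n)^('n + 'n)" where
  "Km X = (- (1/2)) *\<^sub>R (X ** Jmat)"

lemma Km_sym: "X \<in> sp \<Longrightarrow> mtr (Km X) = Km X"
  unfolding Km_def by (simp add: msimps spT)

lemma Km_lin: "Km (c *\<^sub>R X + Y) = c *\<^sub>R Km X + Km Y"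
  unfolding Km_def by (simp add: msimps algebra_simps)

lemma Km_inj: "Km X = 0 \<Longrightarrow> X = 0"
proof -
  assume "Km X = 0"
  then have "X ** Jmat = 0" unfolding Km_def by simp
  then have "(X ** Jmat) ** Jmat = 0" by simp
  then show "X = 0" by (simp add: msimps)
qed

lemma Km_surj:
  assumes "mtr M = M"
  shows "2 *\<^sub>R (M ** Jmat) \<in> sp" "Km (2 *\<^sub>R (M ** Jmat)) = M"
proof -
  show "2 *\<^sub>R (M ** Jmat) \<in> sp" unfolding sp_def using assms by (simp add: msimps)
  show "Km (2 *\<^sub>R (M ** Jmat)) = M" unfolding Km_def by (simp add: msimps)
qed

lemma bracket_antisym:
  assumes X: "X \<in> sp" and Y: "Y \<in> sp"
  defines "A \<equiv> Km X" and "B \<equiv> Km Y"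
  defines "C \<equiv> Km (mbr X Y) - mtr (mtr A ** Jmat ** B + mtr A ** Jmat ** mtr B + A ** Jmat ** B + A ** Jmat ** mtr B)"
  shows "mtr C = - C"
proof -
  have sA: "mtr A = A" and sB: "mtr B = B" unfolding A_def B_def using Km_sym X Y by auto
  have C: "C = Km (mbr X Y) - 4 *\<^sub>R mtr (A ** Jmat ** B)"
    unfolding C_def sA sB by (simp add: vec_eq_iff Finite_Cartesian_Product.transpose_def)
  show ?thesis
    unfolding C A_def B_def Km_def mbr_def
    by (simp add: msimps spT[OF X] spT[OF Y] algebra_simps)
qed


lemma rel2_mem:
  assumes "valid_gen Op (x, ws)" "j < length ws"
  shows "(\<lambda>h. delta (x, ws[j := c *\<^sub>R v + v']) h - c * delta (x, ws[j := v]) h - delta (x, ws[j := v']) h)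
    \<in> Rel Op act"
  unfolding Rel_def
  apply (rule fspan_base)
  unfolding relations_def
  apply (rule UnI1)
  apply (rule UnI2)
  apply (rule CollectI)
  apply (intro exI conjI)
    apply (rule refl)
   apply (rule assms(1))
  apply (rule assms(2))
  done

lemma rel3_mem:
  assumes "valid_gen Op (x, ws)" "s permutes {..<length ws}"
  shows "(\<lambda>h. delta (act (length ws - 1) s x, map (\<lambda>k. ws ! inv s k) [0..<length ws]) h - delta (x, ws) h)
    \<in> Rel Op act"
  unfolding Rel_def
  apply (rule fspan_base)
  unfolding relations_def
  apply (rule UnI2)
  apply (rule CollectI)
  apply (intro exI conjI)
    apply (rule refl)
   apply (rule assms(1))
  apply (rule assms(2))
  done

lemma valid_u: "cyclic_operad Op u gam act \<Longrightarrow> valid_gen Op (u, [v, w])"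
  unfolding valid_gen_def using op_facts(1) by simp

lemma rel_swap:
  assumes op: "cyclic_operad Op u gam act"
  shows "(\<lambda>h. delta (u, [w, v]) h - delta (u, [v, w]) h) \<in> Rel Op act"
proof -
  let ?t = "Transposition.transpose (0::nat) 1"
  have tp: "?t permutes {..<length [v, w]}" by (rule permutes_swap_id) auto
  have "(\<lambda>h. delta (act (length [v, w] - 1) ?t u, map (\<lambda>k. [v, w] ! inv ?t k) [0..<length [v, w]]) h
      - delta (u, [v, w]) h) \<in> Rel Op act"
    by (rule rel3_mem[OF valid_u[OF op] tp])
  moreover have "act (length [v, w] - 1) ?t u = u" using op_facts(4)[OF op] by simp
  moreover have "map (\<lambda>k. [v, w] ! inv ?t k) [0..<length [v, w]] = [w, v]"
    by (simp add: upt_rec Transposition.transpose_def)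
  ultimately show ?thesis by simp
qed

lemma Phi_antisym_Rel:
  assumes op: "cyclic_operad Op u gam act" and C: "\<And>a b. C$b$a = - C$a$b"
  shows "Phi u C \<in> Rel Op act"
proof -
  let ?D = "\<lambda>a b h. delta (u, [E a, E b]) h"
  have R: "(\<lambda>h. \<Sum>a\<in>UNIV. \<Sum>b\<in>UNIV. (- (C$a$b / 2)) * (?D b a h - ?D a b h)) \<in> Rel Op act"
    apply (rule fspan_sum[where S = "relations Op act", folded Rel_def], simp)
    apply (rule fspan_sum[where S = "relations Op act", folded Rel_def], simp)
    apply (rule fspan_scale[where S = "relations Op act", folded Rel_def])
    apply (rule rel_swap[OF op])
    done
  show ?thesis
  proof (rule fspan_eq[where S = "relations Op act", folded Rel_def, OF R])
    fix h
    have sw: "(\<Sum>a\<in>UNIV. \<Sum>b\<in>UNIV. C$a$b * ?D b a h) = (\<Sum>a\<in>UNIV. \<Sum>b\<in>UNIV. C$b$a * ?D a b h)"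
      by (rule sum.swap)
    have "(\<Sum>a\<in>UNIV. \<Sum>b\<in>UNIV. (- (C$a$b / 2)) * (?D b a h - ?D a b h))
       = (\<Sum>a\<in>UNIV. \<Sum>b\<in>UNIV. (1/2) * (C$a$b * ?D a b h) - (1/2) * (C$a$b * ?D b a h))"
      by (intro sum.cong refl) (simp add: algebra_simps)
    also have "\<dots> = (1/2) * (\<Sum>a\<in>UNIV. \<Sum>b\<in>UNIV. C$a$b * ?D a b h) - (1/2) * (\<Sum>a\<in>UNIV. \<Sum>b\<in>UNIV. C$a$b * ?D b a h)"
      by (simp only: sum_subtractf sum_distrib_left)
    also have "\<dots> = (\<Sum>a\<in>UNIV. \<Sum>b\<in>UNIV. C$a$b * ?D a b h)"
    proof -
      have "(\<Sum>a\<in>UNIV. \<Sum>b\<in>UNIV. C$b$a * ?D a b h) = (\<Sum>a\<in>UNIV. \<Sum>b\<in>UNIV. - (C$a$b * ?D a b h))"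
        apply (rule sum.cong[OF refl])+
        apply (subst C)
        apply simp
        done
      then show ?thesis unfolding sw by (simp add: sum_negf)
    qed
    finally show "Phi u C h = (\<Sum>a\<in>UNIV. \<Sum>b\<in>UNIV. (- (C$a$b / 2)) * (?D b a h - ?D a b h))"
      unfolding Phi_def by simp
  qed
qed

lemma rel_expand:
  assumes v: "valid_gen Op (x, ws)" and j: "j < length ws" and S: "finite S"
  shows "(\<lambda>h. delta (x, ws[j := \<Sum>a\<in>S. c a *\<^sub>R y a]) h - (\<Sum>a\<in>S. c a * delta (x, ws[j := y a]) h))
    \<in> Rel Op act"
  using S
proof (induction S rule: finite_induct)
  case empty
  have "(\<lambda>h. delta (x, ws[j := 1 *\<^sub>R 0 + 0]) h - 1 * delta (x, ws[j := 0]) h - delta (x, ws[j := 0]) h)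
    \<in> Rel Op act" by (rule rel2_mem[OF v j])
  then have "(\<lambda>h. (-1) * (delta (x, ws[j := 1 *\<^sub>R 0 + 0]) h - 1 * delta (x, ws[j := 0]) h - delta (x, ws[j := 0]) h))
    \<in> Rel Op act" unfolding Rel_def by (rule fspan_scale)
  then show ?case unfolding Rel_def by (rule fspan_eq) simp
next
  case (insert a S)
  have R2: "(\<lambda>h. delta (x, ws[j := c a *\<^sub>R y a + (\<Sum>a\<in>S. c a *\<^sub>R y a)]) h - c a * delta (x, ws[j := y a]) h
      - delta (x, ws[j := \<Sum>a\<in>S. c a *\<^sub>R y a]) h) \<in> Rel Op act"
    by (rule rel2_mem[OF v j])
  have "(\<lambda>h. (delta (x, ws[j := c a *\<^sub>R y a + (\<Sum>a\<in>S. c a *\<^sub>R y a)]) h - c a * delta (x, ws[j := y a]) h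
      - delta (x, ws[j := \<Sum>a\<in>S. c a *\<^sub>R y a]) h) +
      (delta (x, ws[j := \<Sum>a\<in>S. c a *\<^sub>R y a]) h - (\<Sum>a\<in>S. c a * delta (x, ws[j := y a]) h))) \<in> Rel Op act"
    using fspan_add[OF R2[unfolded Rel_def] insert.IH[unfolded Rel_def]] unfolding Rel_def .
  then show ?case unfolding Rel_def by (rule fspan_eq) (use insert.hyps in simp)
qed

definition outer :: "real^('n::finite + 'n) \<Rightarrow> real^('n + 'n) \<Rightarrow> real^('n + 'n)^('n + 'n)" where
  "outer v w = (\<chi> a b. v$a * w$b)"

lemma vec_expand: "(v :: real^('n::finite + 'n)) = (\<Sum>a\<in>UNIV. v$a *\<^sub>R E a)"
  using basis_expansion[of v] unfolding E_def scalar_mult_eq_scaleR by simp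

lemma d_expand:
  assumes op: "cyclic_operad Op u gam act"
  shows "(\<lambda>h. delta (u, [v, w]) h - Phi u (outer v w) h) \<in> Rel Op act"
proof -
  have s1: "(\<lambda>h. delta (u, [v, w][0 := \<Sum>a\<in>UNIV. v$a *\<^sub>R E a]) h - (\<Sum>a\<in>UNIV. v$a * delta (u, [v, w][0 := E a]) h))
     \<in> Rel Op act"
    by (rule rel_expand[OF valid_u[OF op]]) auto
  have s2: "(\<lambda>h. delta (u, [E a, w][1 := \<Sum>b\<in>UNIV. w$b *\<^sub>R E b]) h - (\<Sum>b\<in>UNIV. w$b * delta (u, [E a, w][1 := E b]) h))
     \<in> Rel Op act" for a
    by (rule rel_expand[OF valid_u[OF op]]) auto
  have s1': "(\<lambda>h. delta (u, [v, w]) h - (\<Sum>a\<in>UNIV. v$a * delta (u, [E a, w]) h)) \<in> Rel Op act"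
    using s1 by (simp flip: vec_expand)
  have s2': "(\<lambda>h. delta (u, [E a, w]) h - (\<Sum>b\<in>UNIV. w$b * delta (u, [E a, E b]) h)) \<in> Rel Op act" for a
    using s2[of a] by (simp flip: vec_expand)
  have s3: "(\<lambda>h. \<Sum>a\<in>UNIV. v$a * (delta (u, [E a, w]) h - (\<Sum>b\<in>UNIV. w$b * delta (u, [E a, E b]) h))) \<in> Rel Op act"
    unfolding Rel_def
    apply (rule fspan_sum, simp)
    apply (rule fspan_scale)
    by (rule s2'[unfolded Rel_def])
  have "(\<lambda>h. (delta (u, [v, w]) h - (\<Sum>a\<in>UNIV. v$a * delta (u, [E a, w]) h)) +
     (\<Sum>a\<in>UNIV. v$a * (delta (u, [E a, w]) h - (\<Sum>b\<in>UNIV. w$b * delta (u, [E a, E b]) h)))) \<in> Rel Op act"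
    using fspan_add[OF s1'[unfolded Rel_def] s3[unfolded Rel_def]] unfolding Rel_def .
  then show ?thesis unfolding Rel_def
    by (rule fspan_eq) (simp add: Phi_def outer_def right_diff_distrib sum_subtractf sum_distrib_left mult.assoc)
qed


section \<open>A functional vanishing on the relations\<close>

lemma perm_2_cases:
  assumes s: "s permutes {..<2::nat}"
  shows "s = id \<or> s = Transposition.transpose 0 1"
proof -
  have out: "\<And>k. k \<ge> 2 \<Longrightarrow> s k = k" using permutes_not_in[OF s] by auto
  have r0: "s 0 < 2" and r1: "s 1 < 2" using permutes_in_image[OF s] by auto
  have ne: "s 0 \<noteq> s 1" using permutes_inj[OF s] unfolding inj_def by (metis zero_neq_one)
  show ?thesis
  proof (cases "s 0 = 0")
    case True
    then have "s 1 = 1" using r1 ne by auto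
    then have "s = id"
    proof -
      have "s k = k" for k
        using True \<open>s 1 = 1\<close> out[of k] by (cases "k = 0"; cases "k = 1") auto
      then show ?thesis by auto
    qed
    then show ?thesis by simp
  next
    case False
    then have "s 0 = 1" "s 1 = 0" using r0 r1 ne by auto
    then have "s k = Transposition.transpose 0 1 k" for k
      using out[of k] by (cases "k = 0"; cases "k = 1") (auto simp: Transposition.transpose_def)
    then show ?thesis by auto
  qed
qed

lemma sum_delta3:
  assumes "finite T" "a \<in> T" "b \<in> T" "e \<in> T"
  shows "(\<Sum>g\<in>T. (delta a g - c * delta b g - c' * delta e g) * l g) = l a - c * l b - c' * l e"
proof -
  have d: "(\<Sum>g\<in>T. delta x g * l g) = l x" if "x \<in> T" for x
    using that assms(1) by (simp add: delta_def ifmultL sum.delta)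
  have "(\<Sum>g\<in>T. (delta a g - c * delta b g - c' * delta e g) * l g)
     = (\<Sum>g\<in>T. delta a g * l g) - c * (\<Sum>g\<in>T. delta b g * l g) - c' * (\<Sum>g\<in>T. delta e g * l g)"
    by (simp add: sum_subtractf sum_distrib_left left_diff_distrib mult.assoc)
  then show ?thesis using d assms by simp
qed

lemma dsum:
  fixes M :: "real^'i::finite^'i"
  shows "(\<Sum>a\<in>UNIV. \<Sum>b\<in>UNIV. M$a$b * ((if p = a then 1 else 0) * (if q = b then 1 else 0)
                     + (if q = a then 1 else 0) * (if p = b then 1 else 0))) = M$p$q + M$q$p"
proof -
  have "(\<Sum>a\<in>UNIV. \<Sum>b\<in>UNIV. M$a$b * ((if p = a then 1 else 0) * (if q = b then 1 else 0)
                     + (if q = a then 1 else 0) * (if p = b then 1 else 0)))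
     = (\<Sum>a\<in>UNIV. (if p = a then M$a$q else 0) + (if q = a then M$a$p else 0))"
    apply (rule sum.cong[OF refl])
    subgoal for a by (cases "p = a"; cases "q = a") (simp_all add: distrib_left sum.distrib ifmultR sum.delta sum.delta')
    done
  also have "\<dots> = M$p$q + M$q$p" by (simp add: sum.distrib sum.delta)
  finally show ?thesis .
qed

lemma Phi_Rel_zero:
  fixes M :: "real^('n::finite + 'n)^('n + 'n)" and u :: "'a::real_vector"
  assumes op: "cyclic_operad Op u gam act" and u0: "u \<noteq> 0" and sym: "mtr M = M"
    and R: "Phi u M \<in> Rel Op act"
  shows "M = 0"
proof -
  note F = op_facts[OF op]
  obtain \<mu> :: "'a \<Rightarrow> real" where lin: "linear \<mu>" and mu: "\<mu> u = 1"
  proof -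
    have "independent {u}" using u0 by (simp add: dependent_single)
    then have "\<exists>g :: 'a \<Rightarrow> real. linear g \<and> (\<forall>x\<in>{u}. g x = 1)"
      by (rule linear_independent_extend)
    then obtain g :: "'a \<Rightarrow> real" where "linear g" "g u = 1" by auto
    then show ?thesis by (rule that)
  qed
  define t where "t = Transposition.transpose (0::nat) 1"
  define lam where "lam x = (\<mu> x + \<mu> (act 1 t x)) / 2" for x
  have lam_u: "lam u = 1" unfolding lam_def t_def using F(4) mu by simp
  have lam_lin: "lam (c *\<^sub>R x + x') = c * lam x + lam x'" if "x \<in> Op 1" "x' \<in> Op 1" for x x' c
  proof -
    have 1: "\<mu> (c *\<^sub>R x + x') = c * \<mu> x + \<mu> x'"
      using real_vector.linear_add[OF lin] real_vector.linear_scale[OF lin] by simp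
    have 2: "\<mu> (act 1 t (c *\<^sub>R x + x')) = c * \<mu> (act 1 t x) + \<mu> (act 1 t x')"
      unfolding t_def F(7)[OF that, of c]
      using real_vector.linear_add[OF lin] real_vector.linear_scale[OF lin] by simp
    show ?thesis unfolding lam_def 1 2 by (simp add: field_simps)
  qed
  have lam_t: "lam (act 1 t x) = lam x" if "x \<in> Op 1" for x
    unfolding lam_def t_def using F(6)[OF that] by simp
  have "M $ p $ q = 0" for p q
  proof -
    define B where "B v w = v$p * w$q + v$q * w$p" for v w :: "real^('n + 'n)"
    define l where "l g = (if length (snd g) = 2 then lam (fst g) * B (snd g ! 0) (snd g ! 1) else 0)"
      for g :: "('a, 'n) gen"
    have Z: "\<exists>k. r = (\<lambda>h. delta (fst k) h - fst (snd (snd (snd k))) * delta (fst (snd k)) h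
                   - snd (snd (snd (snd k))) * delta (fst (snd (snd k))) h)
              \<and> l (fst k) - fst (snd (snd (snd k))) * l (fst (snd k)) - snd (snd (snd (snd k))) * l (fst (snd (snd k))) = 0"
      if r: "r \<in> relations Op act" for r
      using r unfolding relations_def
    proof (elim UnE CollectE exE conjE)
      fix x x' ws c
      assume rr: "r = (\<lambda>h. delta (c *\<^sub>R x + x', ws) h - c * delta (x, ws) h - delta (x', ws) h)"
        and v1: "valid_gen Op (x, ws)" and v2: "valid_gen Op (x', ws)"
      have L: "l (c *\<^sub>R x + x', ws) - c * l (x, ws) - 1 * l (x', ws) = 0"
        proof (cases "length ws = 2")
          case True
          then have "x \<in> Op 1" "x' \<in> Op 1" using v1 v2 by (auto simp: valid_gen_def)
          then show ?thesis using True
            apply (simp add: l_def lam_lin)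
            apply ((simp add: algebra_simps)?)
            done
        next
          case False
          then show ?thesis by (simp add: l_def)
        qed
      show ?thesis
        by (rule exI[of _ "((c *\<^sub>R x + x', ws), (x, ws), (x', ws), c, 1)"]) (use rr L in simp)
    next
      fix x ws j v v' c
      assume rr: "r = (\<lambda>h. delta (x, ws[j := c *\<^sub>R v + v']) h - c * delta (x, ws[j := v]) h - delta (x, ws[j := v']) h)"
        and v1: "valid_gen Op (x, ws)" and j: "j < length ws"
      have L: "l (x, ws[j := c *\<^sub>R v + v']) - c * l (x, ws[j := v]) - 1 * l (x, ws[j := v']) = 0"
        proof (cases "length ws = 2")
          case True
          then have "j = 0 \<or> j = 1" using j by auto
          then show ?thesis
          proof
            assume "j = 0" then show ?thesis using True by (simp add: l_def B_def algebra_simps)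
          next
            assume "j = 1" then show ?thesis using True by (simp add: l_def B_def algebra_simps)
          qed
        next
          case False
          then show ?thesis by (simp add: l_def)
        qed
      show ?thesis
        by (rule exI[of _ "((x, ws[j := c *\<^sub>R v + v']), (x, ws[j := v]), (x, ws[j := v']), c, 1)"]) (use rr L in simp)
    next
      fix x ws s
      assume rr: "r = (\<lambda>h. delta (act (length ws - 1) s x, map (\<lambda>k. ws ! inv s k) [0..<length ws]) h - delta (x, ws) h)"
        and v1: "valid_gen Op (x, ws)" and sp: "s permutes {..<length ws}"
      have L: "l (act (length ws - 1) s x, map (\<lambda>k. ws ! inv s k) [0..<length ws]) - 1 * l (x, ws) - 0 * l (x, ws) = 0"
        proof (cases "length ws = 2")
          case True
          have x1: "x \<in> Op 1" using v1 True by (auto simp: valid_gen_def)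
          have "s = id \<or> s = t" using perm_2_cases[of s] sp True unfolding t_def by simp
          then show ?thesis
          proof
            assume "s = id"
            then show ?thesis using True x1 F(5)[OF x1] by (simp add: l_def map_nth)
          next
            assume st: "s = t"
            have m: "map (\<lambda>k. ws ! inv s k) [0..<length ws] = [ws ! 1, ws ! 0]"
              using True unfolding st t_def by (simp add: upt_rec Transposition.transpose_def)
            show ?thesis using True x1 lam_t[OF x1] unfolding m by (simp add: l_def B_def st algebra_simps)
          qed
        next
          case False
          then show ?thesis by (simp add: l_def)
        qed
      show ?thesis
        by (rule exI[of _ "((act (length ws - 1) s x, map (\<lambda>k. ws ! inv s k) [0..<length ws]), (x, ws), (x, ws), 1, 0)"])
          (use rr L in simp)
    qed
    obtain A cf where A: "finite A" "A \<subseteq> relations Op act" "Phi u M = (\<lambda>h. \<Sum>r\<in>A. cf r * r h)"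
      using fspanD[OF R[unfolded Rel_def]] by (elim exE conjE) iprover
    have ex: "\<forall>r\<in>A. \<exists>k. r = (\<lambda>h. delta (fst k) h - fst (snd (snd (snd k))) * delta (fst (snd k)) h
                   - snd (snd (snd (snd k))) * delta (fst (snd (snd k))) h)
              \<and> l (fst k) - fst (snd (snd (snd k))) * l (fst (snd k)) - snd (snd (snd (snd k))) * l (fst (snd (snd k))) = 0"
      using Z A(2) by (simp add: subset_iff)
    obtain K where K: "\<forall>r\<in>A. r = (\<lambda>h. delta (fst (K r)) h - fst (snd (snd (snd (K r)))) * delta (fst (snd (K r))) h
                   - snd (snd (snd (snd (K r)))) * delta (fst (snd (snd (K r)))) h)
              \<and> l (fst (K r)) - fst (snd (snd (snd (K r)))) * l (fst (snd (K r))) - snd (snd (snd (snd (K r)))) * l (fst (snd (snd (K r)))) = 0"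
      using bchoice[OF ex] by (elim exE) iprover
    define T where "T = S0 u \<union> (\<Union>r\<in>A. {fst (K r), fst (snd (K r)), fst (snd (snd (K r)))})"
    have Tfin: "finite T" unfolding T_def using A(1) S0_finite by simp
    have rz: "(\<Sum>g\<in>T. r g * l g) = 0" if rA: "r \<in> A" for r
    proof -
      define a where "a = fst (K r)"
      define b where "b = fst (snd (K r))"
      define e where "e = fst (snd (snd (K r)))"
      define c where "c = fst (snd (snd (snd (K r))))"
      define c' where "c' = snd (snd (snd (snd (K r))))"
      have Kr: "r = (\<lambda>h. delta a h - c * delta b h - c' * delta e h) \<and> l a - c * l b - c' * l e = 0"
        using K rA unfolding a_def b_def e_def c_def c'_def by (rule bspec)
      have mem: "a \<in> T" "b \<in> T" "e \<in> T" using rA unfolding T_def a_def b_def e_def by auto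
      have "(\<Sum>g\<in>T. r g * l g) = (\<Sum>g\<in>T. (delta a g - c * delta b g - c' * delta e g) * l g)"
        by (subst conjunct1[OF Kr]) (rule refl)
      also have "\<dots> = l a - c * l b - c' * l e" by (rule sum_delta3[OF Tfin mem])
      also have "\<dots> = 0" using conjunct2[OF Kr] .
      finally show ?thesis .
    qed
    have zero: "(\<Sum>g\<in>T. Phi u M g * l g) = 0"
    proof -
      have "(\<Sum>g\<in>T. Phi u M g * l g) = (\<Sum>g\<in>T. \<Sum>r\<in>A. cf r * (r g * l g))"
        unfolding A(3) by (simp add: sum_distrib_right mult.assoc)
      also have "\<dots> = (\<Sum>r\<in>A. cf r * (\<Sum>g\<in>T. r g * l g))"
        by (subst sum.swap) (simp add: sum_distrib_left)
      also have "\<dots> = 0" using rz by simp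
      finally show ?thesis .
    qed
    have "(\<Sum>g\<in>T. Phi u M g * l g) = (\<Sum>g\<in>S0 u. Phi u M g * l g)"
      by (rule sum.mono_neutral_right[OF Tfin]) (use Phi_supp[of u M] in \<open>auto simp: T_def\<close>)
    also have "\<dots> = (\<Sum>a\<in>UNIV. \<Sum>b\<in>UNIV. M$a$b * ((if p = a then 1 else 0) * (if q = b then 1 else 0)
                     + (if q = a then 1 else 0) * (if p = b then 1 else 0)))"
      unfolding sum_S0 Phi_eval by (simp add: l_def B_def lam_u E_def axis_def)
    also have "\<dots> = M$p$q + M$q$p" by (rule dsum)
    finally have "M$p$q + M$q$p = 0" using zero by simp
    moreover have "M$q$p = M$p$q"
      using arg_cong[OF sym, of "\<lambda>N. N$p$q"] by (simp add: Finite_Cartesian_Product.transpose_def)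
    ultimately show ?thesis by simp
  qed
  then show ?thesis by (simp add: vec_eq_iff)
qed


section \<open>Closure of A0 under the bracket\<close>

lemma A0_supp:
  assumes "a \<in> A0 u"
  shows "finite {g. a g \<noteq> 0} \<and> (\<forall>g. a g \<noteq> 0 \<longrightarrow> (\<exists>v w. g = (u, [v, w])))"
proof -
  obtain A c where A: "finite A" "A \<subseteq> {delta (u, [v, w]) | v w. True}" "a = (\<lambda>h. \<Sum>x\<in>A. c x * x h)"
    using fspanD[OF assms[unfolded A0_def]] by (elim exE conjE) iprover
  have sub: "{g. a g \<noteq> 0} \<subseteq> (\<Union>x\<in>A. {g. x g \<noteq> 0})"
  proof
    fix g assume "g \<in> {g. a g \<noteq> 0}"
    then have "(\<Sum>x\<in>A. c x * x g) \<noteq> 0" using A(3) by simp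
    then obtain x where "x \<in> A" "c x * x g \<noteq> 0" by (rule sum.not_neutral_contains_not_neutral)
    then show "g \<in> (\<Union>x\<in>A. {g. x g \<noteq> 0})" by auto
  qed
  have fx: "finite {g. x g \<noteq> 0} \<and> (\<forall>g. x g \<noteq> 0 \<longrightarrow> (\<exists>v w. g = (u, [v, w])))" if xA: "x \<in> A" for x
  proof -
    have "x \<in> {delta (u, [v, w]) | v w. True}" using A(2) xA by (rule subsetD)
    then obtain v w where x: "x = delta (u, [v, w])" by auto
    have eq: "{g. x g \<noteq> 0} = {(u, [v, w])}" unfolding x delta_def by auto
    have "\<forall>g. x g \<noteq> 0 \<longrightarrow> (\<exists>v w. g = (u, [v, w]))"
    proof (intro allI impI)
      fix g assume "x g \<noteq> 0"
      then have "g \<in> {(u, [v, w])}" unfolding eq[symmetric] by simp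
      then have "g = (u, [v, w])" by simp
      then show "\<exists>v w. g = (u, [v, w])" by (intro exI)
    qed
    then show ?thesis using eq by simp
  qed
  show ?thesis
  proof
    show "finite {g. a g \<noteq> 0}" by (rule finite_subset[OF sub]) (use A(1) fx in auto)
    show "\<forall>g. a g \<noteq> 0 \<longrightarrow> (\<exists>v w. g = (u, [v, w]))"
    proof (intro allI impI)
      fix g assume "a g \<noteq> 0"
      then obtain x where xA: "x \<in> A" and xg: "x g \<noteq> 0" using sub by auto
      show "\<exists>v w. g = (u, [v, w])" by (rule conjunct2[OF fx[OF xA], rule_format, OF xg])
    qed
  qed
qed

lemma delta_A0: "delta (u, [v, w]) \<in> A0 u"
  unfolding A0_def by (rule fspan_base) auto

lemma brgen_A0:
  assumes op: "cyclic_operad Op u gam act"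
  shows "brgen u gam act (u, [v0, v1]) (u, [w0, w1]) \<in> A0 u"
  unfolding brgen2[OF op] A0_def
  by (intro fspan_add fspan_scale delta_A0[unfolded A0_def])

lemma br_A0:
  assumes op: "cyclic_operad Op u gam act" and a: "a \<in> A0 u" and b: "b \<in> A0 u"
  shows "br u gam act a b \<in> A0 u"
proof -
  note sa = A0_supp[OF a] and sb = A0_supp[OF b]
  have "(\<lambda>h. \<Sum>g1\<in>{x. a x \<noteq> 0}. \<Sum>g2\<in>{x. b x \<noteq> 0}. a g1 * b g2 * brgen u gam act g1 g2 h) \<in> A0 u"
    unfolding A0_def
  proof (rule fspan_sum)
    show "finite {x. a x \<noteq> 0}" using sa by simp
    fix g1 assume g1: "g1 \<in> {x. a x \<noteq> 0}"
    show "(\<lambda>h. \<Sum>g2\<in>{x. b x \<noteq> 0}. a g1 * b g2 * brgen u gam act g1 g2 h) \<in> fspan {delta (u, [v, w]) | v w. True}"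
    proof (rule fspan_sum)
      show "finite {x. b x \<noteq> 0}" using sb by simp
      fix g2 assume g2: "g2 \<in> {x. b x \<noteq> 0}"
      have "\<exists>v w. g1 = (u, [v, w])" by (rule conjunct2[OF sa, rule_format]) (use g1 in simp)
      then obtain v0 v1 where 1: "g1 = (u, [v0, v1])" by (elim exE) iprover
      have "\<exists>v w. g2 = (u, [v, w])" by (rule conjunct2[OF sb, rule_format]) (use g2 in simp)
      then obtain w0 w1 where 2: "g2 = (u, [w0, w1])" by (elim exE) iprover
      show "(\<lambda>h. a g1 * b g2 * brgen u gam act g1 g2 h) \<in> fspan {delta (u, [v, w]) | v w. True}"
        unfolding 1 2 by (rule fspan_scale, rule brgen_A0[OF op, unfolded A0_def])
    qed
  qed
  moreover have "br u gam act a b = (\<lambda>h. \<Sum>g1\<in>{x. a x \<noteq> 0}. \<Sum>g2\<in>{x. b x \<noteq> 0}. a g1 * b g2 * brgen u gam act g1 g2 h)"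
    unfolding br_def by simp
  ultimately show ?thesis by simp
qed

theorem proposition2p17:
  fixes Op :: "nat \<Rightarrow> 'a::real_vector set"
    and u :: 'a
    and gam :: "nat list \<Rightarrow> 'a \<Rightarrow> 'a list \<Rightarrow> 'a"
    and act :: "nat \<Rightarrow> (nat \<Rightarrow> nat) \<Rightarrow> 'a \<Rightarrow> 'a"
  assumes "cyclic_operad Op u gam act"
    and "u \<noteq> 0"
  shows "(\<forall>a\<in>(A0 u :: (('a, 'n::finite) gen \<Rightarrow> real) set). \<forall>b\<in>A0 u.
            \<exists>c\<in>A0 u. (\<lambda>h. br u gam act a b h - c h) \<in> Rel Op act)
    \<and> (\<exists>\<phi> :: real^('n + 'n)^('n + 'n) \<Rightarrow> (('a, 'n) gen \<Rightarrow> real).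
          (\<forall>X\<in>sp. \<phi> X \<in> A0 u)
        \<and> (\<forall>X\<in>sp. \<forall>Y\<in>sp. \<forall>c::real.
             (\<lambda>h. \<phi> (c *\<^sub>R X + Y) h - c * \<phi> X h - \<phi> Y h) \<in> Rel Op act)
        \<and> (\<forall>X\<in>sp. \<phi> X \<in> Rel Op act \<longrightarrow> X = 0)
        \<and> (\<forall>a\<in>A0 u. \<exists>X\<in>sp. (\<lambda>h. a h - \<phi> X h) \<in> Rel Op act)
        \<and> (\<forall>X\<in>sp. \<forall>Y\<in>sp. (\<lambda>h. \<phi> (mbr X Y) h - br u gam act (\<phi> X) (\<phi> Y) h) \<in> Rel Op act))"
proof -
  note op = assms(1)
  have zeroR: "(\<lambda>h. 0) \<in> Rel Op act" unfolding Rel_def by (rule fspan_zero)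
  have P1: "\<forall>a\<in>(A0 u :: (('a, 'n::finite) gen \<Rightarrow> real) set). \<forall>b\<in>A0 u.
            \<exists>c\<in>A0 u. (\<lambda>h. br u gam act a b h - c h) \<in> Rel Op act"
  proof (intro ballI)
    fix a b :: "('a, 'n) gen \<Rightarrow> real" assume a: "a \<in> A0 u" and b: "b \<in> A0 u"
    show "\<exists>c\<in>A0 u. (\<lambda>h. br u gam act a b h - c h) \<in> Rel Op act"
      by (rule bexI[of _ "br u gam act a b"]) (use zeroR br_A0[OF op a b] in simp_all)
  qed
  define \<phi> :: "real^('n + 'n)^('n + 'n) \<Rightarrow> (('a, 'n) gen \<Rightarrow> real)" where "\<phi> X = Phi u (Km X)" for X
  have i: "\<forall>X\<in>sp. \<phi> X \<in> A0 u" unfolding \<phi>_def by (simp add: Phi_A0)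
  have ii: "\<forall>X\<in>sp. \<forall>Y\<in>sp. \<forall>c::real. (\<lambda>h. \<phi> (c *\<^sub>R X + Y) h - c * \<phi> X h - \<phi> Y h) \<in> Rel Op act"
    unfolding \<phi>_def Km_lin Phi_lin by (simp add: zeroR)
  have iii: "\<forall>X\<in>sp. \<phi> X \<in> Rel Op act \<longrightarrow> X = 0"
  proof (intro ballI impI)
    fix X :: "real^('n + 'n)^('n + 'n)" assume X: "X \<in> sp" and R: "\<phi> X \<in> Rel Op act"
    have "Km X = 0" by (rule Phi_Rel_zero[OF op assms(2) Km_sym[OF X] R[unfolded \<phi>_def]])
    then show "X = 0" by (rule Km_inj)
  qed
  have iv: "\<forall>a\<in>A0 u. \<exists>X\<in>sp. (\<lambda>h. a h - \<phi> X h) \<in> Rel Op act"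
  proof
    fix a :: "('a, 'n) gen \<Rightarrow> real" assume a: "a \<in> A0 u"
    obtain A c where A: "finite A" "A \<subseteq> {delta (u, [v, w]) | v w. True}" "a = (\<lambda>h. \<Sum>x\<in>A. c x * x h)"
      using fspanD[OF a[unfolded A0_def]] by (elim exE conjE) iprover
    have ex: "\<forall>x\<in>A. \<exists>vw. x = delta (u, [fst vw, snd vw])" using A(2) by auto
    obtain VW where VW: "\<forall>x\<in>A. x = delta (u, [fst (VW x), snd (VW x)])"
      using bchoice[OF ex] by (elim exE) iprover
    define M where "M = (\<Sum>x\<in>A. c x *\<^sub>R outer (fst (VW x)) (snd (VW x)))"
    define Ms where "Ms = (1/2) *\<^sub>R (M + mtr M)"
    have Ms_sym: "mtr Ms = Ms" unfolding Ms_def by (simp add: tr_add transpose_scalar add.commute)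
    define X where "X = 2 *\<^sub>R (Ms ** Jmat)"
    have X: "X \<in> sp" "Km X = Ms" unfolding X_def using Km_surj[OF Ms_sym] by auto
    have r1: "(\<lambda>h. a h - Phi u M h) \<in> Rel Op act"
    proof -
      have "(\<lambda>h. \<Sum>x\<in>A. c x * (delta (u, [fst (VW x), snd (VW x)]) h - Phi u (outer (fst (VW x)) (snd (VW x))) h))
         \<in> Rel Op act"
        unfolding Rel_def
        by (intro fspan_sum fspan_scale d_expand[OF op, unfolded Rel_def] A(1))
      then show ?thesis unfolding Rel_def
      proof (rule fspan_eq)
        fix h
        have eqx: "c x * x h = c x * delta (u, [fst (VW x), snd (VW x)]) h" if xA: "x \<in> A" for x
        proof -
          have e: "x = delta (u, [fst (VW x), snd (VW x)])" using VW xA by (rule bspec)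
          show ?thesis by (rule arg_cong[OF e, of "\<lambda>f. c x * f h"])
        qed
        have "a h = (\<Sum>x\<in>A. c x * delta (u, [fst (VW x), snd (VW x)]) h)"
          unfolding A(3) by (rule sum.cong[OF refl eqx])
        then show "a h - Phi u M h = (\<Sum>x\<in>A. c x * (delta (u, [fst (VW x), snd (VW x)]) h - Phi u (outer (fst (VW x)) (snd (VW x))) h))"
          unfolding M_def Phi_sum[OF A(1)] by (simp add: sum_subtractf right_diff_distrib)
      qed
    qed
    have r2: "Phi u (M - Ms) \<in> Rel Op act"
      by (rule Phi_antisym_Rel[OF op]) (simp add: Ms_def Finite_Cartesian_Product.transpose_def algebra_simps)
    have "(\<lambda>h. (a h - Phi u M h) + Phi u (M - Ms) h) \<in> Rel Op act"
      using fspan_add[OF r1[unfolded Rel_def] r2[unfolded Rel_def]] unfolding Rel_def .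
    then have "(\<lambda>h. a h - \<phi> X h) \<in> Rel Op act"
      unfolding Rel_def by (rule fspan_eq) (simp add: \<phi>_def X(2) Phi_diff)
    then show "\<exists>X\<in>sp. (\<lambda>h. a h - \<phi> X h) \<in> Rel Op act" by (rule bexI[OF _ X(1)])
  qed
  have v: "\<forall>X\<in>sp. \<forall>Y\<in>sp. (\<lambda>h. \<phi> (mbr X Y) h - br u gam act (\<phi> X) (\<phi> Y) h) \<in> Rel Op act"
  proof (intro ballI)
    fix X Y :: "real^('n + 'n)^('n + 'n)" assume X: "X \<in> sp" and Y: "Y \<in> sp"
    define C where "C = Km (mbr X Y) - mtr (mtr (Km X) ** Jmat ** Km Y + mtr (Km X) ** Jmat ** mtr (Km Y)
       + Km X ** Jmat ** Km Y + Km X ** Jmat ** mtr (Km Y))"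
    have aC: "mtr C = - C" unfolding C_def by (rule bracket_antisym[OF X Y])
    have Cr: "C$b$a = - C$a$b" for a b
      using arg_cong[OF aC, of "\<lambda>N. N$a$b"] by (simp add: Finite_Cartesian_Product.transpose_def)
    have "Phi u C \<in> Rel Op act" by (rule Phi_antisym_Rel[OF op Cr])
    then show "(\<lambda>h. \<phi> (mbr X Y) h - br u gam act (\<phi> X) (\<phi> Y) h) \<in> Rel Op act"
      unfolding Rel_def by (rule fspan_eq) (simp add: \<phi>_def br_Phi[OF op] C_def Phi_diff)
  qed
  show ?thesis
    apply (rule conjI[OF P1])
    apply (rule exI[of _ \<phi>])
    apply (intro conjI)
        apply (rule i)
       apply (rule ii)
      apply (rule iii)
     apply (rule iv)
    apply (rule v)
    done
qed

end
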